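(* Let $(a_n)_n=[a_{n\varepsilon}]_{\mathrm s}\in\widetilde{\mathbb C}_{\mathrm s}$. Assume that there are $k=[k_\varepsilon]\in\widetilde{\mathbb N}$ with $k_\varepsilon\in\mathbb N$ and $L=[L_\varepsilon]\in\widetilde{\mathbb R}_{>0}$ such that for all sufficiently small $\varepsilon$ and all $n\in\mathbb N$ with $n\ge k_\varepsilon$ (and $n\ge1$), $$|a_{n\varepsilon}|^{1/n}\le L_\varepsilon .$$ If $L<1$, then the hyperseries $\sum_{n\in\widetilde{\mathbb N}}|a_n|$ (where $(|a_n|)_n:=[|a_{n\varepsilon}|]_{\mathrm s}$) converges, and hence also $\sum_{n\in\widetilde{\mathbb N}}a_n$ converges.
   Context: Fix $I=(0,1]$ and a gauge $\rho=(\rho_\varepsilon)_{\varepsilon\in I}$ with $\rho_\varepsilon\in I$ and $\rho_\varepsilon\to0$ as $\varepsilon\to0$. "$\forall^0\varepsilon$" means "for all sufficiently small $\varepsilon\in I$". A net $(x_\varepsilon)\in\mathbb C^I$ is $\rho$-moderate ($(x_\varepsilon)\in\mathbb C_\rho$) if $\exists N\in\mathbb N\,\forall^0\varepsilon:|x_\varepsilon|\le\rho_\varepsilon^{-N}$, and $\rho$-negligible if $\forall q\in\mathbb N\,\forall^0\varepsilon:|x_\varepsilon|\le\rho_\varepsilon^q$. $\widetilde{\mathbb C}:=\mathbb C_\rho/\{\text{negligible nets}\}$ with classes $[x_\varepsilon]$; $\widetilde{\mathbb R}\subseteq\widetilde{\mathbb C}$ consists of classes of real moderate nets; $\mathrm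 d\rho:=[\rho_\varepsilon]$, $|[z_\varepsilon]|:=[|z_\varepsilon|]$. On $\widetilde{\mathbb R}$: $[x_\varepsilon]\le[y_\varepsilon]$ iff $x_\varepsilon\le y_\varepsilon+z_\varepsilon$ $\forall^0\varepsilon$ for some negligible $(z_\varepsilon)$; $x<y$ iff $\exists m\,\forall^0\varepsilon:y_\varepsilon-x_\varepsilon>\rho_\varepsilon^m$; $\widetilde{\mathbb R}_{>0}:=\{x:x>0\}$. Hypernatural numbers: $\widetilde{\mathbb N}:=\{[n_\varepsilon]\in\widetilde{\mathbb R}:n_\varepsilon\in\mathbb N\ \forall\varepsilon\}$; for each $N\in\widetilde{\mathbb N}$ a representative $(\mathrm{ni}(N)_\varepsilon)$ with all $\mathrm{ni}(N)_\varepsilon\in\mathbb N$ is fixed. Hyperlimit: for a map $n\in\widetilde{\mathbb N}\mapsto a_n\in\widetilde{\mathbb C}$, $l=\lim_{n\in\widetilde{\mathbb N}}a_n$ means $\forall q\in\mathbb N\,\exists M\in\widetilde{\mathbb N}\,\forall n\in\widetilde{\mathbb N}:n\ge M\Rightarrow|a_n-l|<\mathrm d\rho^q$. Hyperseries: a net $(a_{n\varepsilon})_{n\in\mathbb N,\varepsilon\in I}$ of complex numbers is moderate over hypersums if for every $N\in\widetilde{\mathbb N}$ the net $(\sum_{n=0}^{\mathrm{ni}(N)_\varepsilon}a_{n\varepsilon})_\varepsilon$ is $\rho$-moderate; two such nets $(a_{n\varepsilon}),(\bar a_{n\varepsilon})$ are equivalent if for all $N,M\in\widetilde{\mathbb N}$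 the net $(\sum_{n=\mathrm{ni}(N)_\varepsilon}^{\mathrm{ni}(M)_\varepsilon}(a_{n\varepsilon}-\bar a_{n\varepsilon}))_\varepsilon$ is negligible. The quotient is $\widetilde{\mathbb C}_{\mathrm s}$ (resp. $\widetilde{\mathbb R}_{\mathrm s}$ for real nets), with classes $(a_n)_n=[a_{n\varepsilon}]_{\mathrm s}$. For $N,M\in\widetilde{\mathbb N}$, $\sum_{n=N}^Ma_n:=[\sum_{n=\mathrm{ni}(N)_\varepsilon}^{\mathrm{ni}(M)_\varepsilon}a_{n\varepsilon}]$ (empty sums equal $0$). The hyperseries $\sum_{n\in\widetilde{\mathbb N}}a_n$ converges to $s$ if $s=\lim_{N\in\widetilde{\mathbb N}}\sum_{n=0}^Na_n$ exists in $\widetilde{\mathbb C}$. *)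

theory Defs
  imports Complex_Main
begin

text \<open>Nets are functions on the parameter eps; only eps in I = (0,1] matter.
  "for all sufficiently small eps" is eventually along at_right 0.\<close>

definition gauge :: "(real \<Rightarrow> real) \<Rightarrow> bool" where
  "gauge \<rho> \<longleftrightarrow> (\<forall>e. 0 < e \<and> e \<le> 1 \<longrightarrow> 0 < \<rho> e \<and> \<rho> e \<le> 1) \<and> (\<rho> \<longlongrightarrow> 0) (at_right 0)"

definition moderate :: "(real \<Rightarrow> real) \<Rightarrow> (real \<Rightarrow> 'a::real_normed_vector) \<Rightarrow> bool" where
  "moderate \<rho> x \<longleftrightarrow> (\<exists>N::nat. eventually (\<lambda>e. norm (x e) \<le> inverse (\<rho> e ^ N)) (at_right 0))"

definition negligible :: "(real \<Rightarrow> real) \<Rightarrow> (real \<Rightarrow> 'a::real_normed_vector) \<Rightarrow> bool" where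
  "negligible \<rho> x \<longleftrightarrow> (\<forall>q::nat. eventually (\<lambda>e. norm (x e) \<le> \<rho> e ^ q) (at_right 0))"

definition hyp_le :: "(real \<Rightarrow> real) \<Rightarrow> (real \<Rightarrow> real) \<Rightarrow> (real \<Rightarrow> real) \<Rightarrow> bool" where
  "hyp_le \<rho> x y \<longleftrightarrow> (\<exists>z. negligible \<rho> z \<and> eventually (\<lambda>e. x e \<le> y e + z e) (at_right 0))"

definition hyp_less :: "(real \<Rightarrow> real) \<Rightarrow> (real \<Rightarrow> real) \<Rightarrow> (real \<Rightarrow> real) \<Rightarrow> bool" where
  "hyp_less \<rho> x y \<longleftrightarrow> (\<exists>m::nat. eventually (\<lambda>e. y e - x e > \<rho> e ^ m) (at_right 0))"

definition hypernat :: "(real \<Rightarrow> real) \<Rightarrow> (real \<Rightarrow> nat) \<Rightarrow> bool" where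
  "hypernat \<rho> n \<longleftrightarrow> moderate \<rho> (\<lambda>e. real (n e))"

text \<open>A net (a n e) is moderate over hypersums (i.e. represents an element of C~_s).\<close>
definition moderate_hypersums :: "(real \<Rightarrow> real) \<Rightarrow> (nat \<Rightarrow> real \<Rightarrow> complex) \<Rightarrow> bool" where
  "moderate_hypersums \<rho> a \<longleftrightarrow>
     (\<forall>N. hypernat \<rho> N \<longrightarrow> moderate \<rho> (\<lambda>e. \<Sum>n\<le>N e. a n e))"

text \<open>The hyperseries with terms [a n e]_s converges (to some s in C~): the hyperlimit
  of the partial hypersums sum_{n=0}^N a_n exists.\<close>
definition hyperseries_converges :: "(real \<Rightarrow> real) \<Rightarrow> (nat \<Rightarrow> real \<Rightarrow> complex) \<Rightarrow> bool" where
  "hyperseries_converges \<rho> a \<longleftrightarrow>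
     (\<exists>s. moderate \<rho> s \<and>
        (\<forall>q::nat. \<exists>M. hypernat \<rho> M \<and>
           (\<forall>N. hypernat \<rho> N \<and> hyp_le \<rho> (\<lambda>e. real (M e)) (\<lambda>e. real (N e)) \<longrightarrow>
              hyp_less \<rho> (\<lambda>e. norm ((\<Sum>n\<le>N e. a n e) - s e)) (\<lambda>e. \<rho> e ^ q))))"

end

theory Submission
  imports Defs
begin


lemma tail_geom:
  fixes f :: "nat \<Rightarrow> real"
  assumes f0: "\<And>n. 0 \<le> f n" and L0: "0 \<le> L" and L1: "L < 1"
    and fb: "\<And>n. n \<ge> K \<Longrightarrow> f n \<le> L ^ n" and j: "j \<ge> K"
  shows "summable f" "(\<Sum>i. f (i + j)) \<le> L ^ j / (1 - L)"
proof -
  have sg: "summable (\<lambda>n. L ^ n)" using L0 L1 by simp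
  show sf: "summable f"
    by (rule summable_comparison_test'[OF sg, of K]) (use f0 fb in auto)
  have sg2: "summable (\<lambda>i. L ^ j * L ^ i)" using sg by (rule summable_mult)
  have "(\<Sum>i. f (i + j)) \<le> (\<Sum>i. L ^ j * L ^ i)"
  proof (rule suminf_le)
    fix i
    have "f (i + j) \<le> L ^ (i + j)" using fb j by simp
    also have "\<dots> = L ^ j * L ^ i" by (simp add: power_add)
    finally show "f (i + j) \<le> L ^ j * L ^ i" .
    show "summable (\<lambda>i. f (i + j))" using sf by (rule summable_ignore_initial_segment)
    show "summable (\<lambda>i. L ^ j * L ^ i)" using sg2 .
  qed
  also have "\<dots> = L ^ j * (1 / (1 - L))"
    using suminf_mult[OF sg, of "L^j"] suminf_geometric[of L] L0 L1 by simp
  finally show "(\<Sum>i. f (i + j)) \<le> L ^ j / (1 - L)" by simp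
qed

lemma geom_facts:
  fixes f :: "nat \<Rightarrow> real"
  assumes f0: "\<And>n. 0 \<le> f n" and L0: "0 \<le> L" and L1: "L < 1"
    and fb: "\<And>n. n \<ge> K \<Longrightarrow> f n \<le> L ^ n"
  shows "summable f"
    and "\<And>N. K \<le> Suc N \<Longrightarrow> suminf f - (\<Sum>n\<le>N. f n) \<le> L ^ Suc N / (1 - L)"
    and "suminf f \<le> (\<Sum>n<K. f n) + 1 / (1 - L)"
    and "\<And>N. (\<Sum>n\<le>N. f n) \<le> suminf f"
proof -
  show sf: "summable f" using tail_geom[OF f0 L0 L1 fb] by auto
  show "suminf f - (\<Sum>n\<le>N. f n) \<le> L ^ Suc N / (1 - L)" if "K \<le> Suc N" for N
    using tail_geom(2)[OF f0 L0 L1 fb that] suminf_minus_initial_segment[OF sf, of "Suc N"]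
    by (simp add: lessThan_Suc_atMost)
  have "(\<Sum>i. f (i + K)) \<le> L ^ K / (1 - L)" using tail_geom(2)[OF f0 L0 L1 fb] by auto
  also have "\<dots> \<le> 1 / (1 - L)" using L0 L1 by (simp add: divide_right_mono power_le_one)
  finally show "suminf f \<le> (\<Sum>n<K. f n) + 1 / (1 - L)"
    using suminf_split_initial_segment[OF sf, of K] by simp
  show "(\<Sum>n\<le>N. f n) \<le> suminf f" for N
    by (rule sum_le_suminf[OF sf]) (use f0 in auto)
qed


lemma pow_bound:
  fixes d :: real
  assumes "0 \<le> d" "d \<le> 1"
  shows "(1 - d) ^ M \<le> 1 / (1 + d * real M)"
proof -
  have "(1 - d) ^ M \<le> exp (- d) ^ M"
    using assms by (intro power_mono) (auto simp: exp_ge_add_one_self[of "-d", simplified])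
  also have "\<dots> = exp (- (d * real M))" by (simp add: exp_of_nat_mult[symmetric] mult.commute)
  also have "\<dots> = 1 / exp (d * real M)" by (simp add: exp_minus field_simps)
  also have "\<dots> \<le> 1 / (1 + d * real M)"
  proof (rule divide_left_mono)
    have h: "0 < 1 + d * real M" using assms by (simp add: add_pos_nonneg)
    show "0 < exp (d * real M) * (1 + d * real M)" using h by simp
  qed (use exp_ge_add_one_self[of "d * real M"] in auto)
  finally show ?thesis .
qed

lemma tail_small:
  fixes f :: "nat \<Rightarrow> real" and r L :: real
  assumes r0: "0 < r" and r1: "r < 1" and L0: "0 \<le> L" and Ld: "1 - L > r ^ m1"
    and f0: "\<And>n. 0 \<le> f n" and fb: "\<And>n. n \<ge> K \<Longrightarrow> f n \<le> L ^ n"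
    and KM: "K \<le> M" and Mbig: "real M \<ge> inverse (r ^ (q + 1 + 2 * m1))" and MN: "M \<le> N"
  shows "suminf f - (\<Sum>n\<le>N. f n) \<le> r ^ (q + 1)"
proof -
  define d where "d = r ^ m1"
  have d0: "0 < d" and d1: "d \<le> 1" using r0 r1 by (auto simp: d_def power_le_one)
  have L1: "L < 1" using Ld d0 d_def by simp
  have "suminf f - (\<Sum>n\<le>N. f n) \<le> L ^ Suc N / (1 - L)"
    using geom_facts(2)[OF f0 L0 L1 fb] KM MN by simp
  also have "\<dots> \<le> L ^ M / d"
  proof (rule frac_le)
    show "L ^ Suc N \<le> L ^ M" using L0 L1 MN by (intro power_decreasing) auto
  qed (use L0 d0 Ld d_def in auto)
  also have "\<dots> \<le> (1 / (1 + d * real M)) / d"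
  proof (rule divide_right_mono)
    have "L ^ M \<le> (1 - d) ^ M" using L0 Ld d_def by (intro power_mono) auto
    then show "L ^ M \<le> 1 / (1 + d * real M)" using pow_bound[OF less_imp_le[OF d0] d1, of M] by linarith
  qed (use d0 in auto)
  also have "\<dots> \<le> 1 / (d * d * real M)"
  proof -
    have Mpos: "real M > 0"
    proof -
      have "0 < inverse (r ^ (q + 1 + 2 * m1))" using r0 by simp
      then show ?thesis using Mbig by linarith
    qed
    have "d * d * real M \<le> (1 + d * real M) * d" using d0 by (simp add: algebra_simps)
    moreover have "0 < 1 + d * real M" using d0 Mpos by (simp add: add_pos_nonneg)
    moreover have "0 < d * d * real M" using d0 Mpos by simp
    ultimately show ?thesis using d0 by (simp add: divide_simps)
  qed
  also have "\<dots> \<le> r ^ (q + 1)"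
  proof -
    have Mpos: "real M > 0"
    proof -
      have "0 < inverse (r ^ (q + 1 + 2 * m1))" using r0 by simp
      then show ?thesis using Mbig by linarith
    qed
    have e0: "r ^ (q + 1 + 2 * m1) = r ^ (q+1) * (r ^ m1 * r ^ m1)"
      by (simp only: mult_2 power_add)
    have e: "inverse (r ^ (q + 1 + 2 * m1)) = 1 / (r ^ (q+1) * d * d)"
      unfolding e0 d_def by (simp add: inverse_eq_divide mult.assoc)
    have "1 / (r ^ (q+1) * d * d) \<le> real M" using Mbig e by simp
    then have "1 \<le> real M * (r ^ (q+1) * d * d)" using r0 d0 by (simp add: divide_simps)
    then show ?thesis using r0 d0 Mpos by (simp add: divide_simps algebra_simps)
  qed
  finally show ?thesis .
qed


lemma gauge_ev:
  assumes "gauge \<rho>"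
  shows "eventually (\<lambda>e. 0 < \<rho> e \<and> \<rho> e < 1/2) (at_right 0)"
proof -
  have "eventually (\<lambda>e::real. e \<in> {0<..<1}) (at_right 0)" by (rule eventually_at_right_real) simp
  moreover have "eventually (\<lambda>e. \<rho> e < 1/2) (at_right 0)"
    using assms unfolding gauge_def by (intro order_tendstoD(2)) auto
  ultimately show ?thesis
    by eventually_elim (use assms in \<open>auto simp: gauge_def\<close>)
qed

lemma inv_pow_mono:
  fixes r :: real
  assumes "0 < r" "r \<le> 1" "N \<le> N'"
  shows "inverse (r ^ N) \<le> inverse (r ^ N')"
  using assms by (intro le_imp_inverse_le power_decreasing) auto

lemma mod_mono:
  assumes "moderate \<rho> y" "eventually (\<lambda>e. norm (x e) \<le> norm (y e)) (at_right 0)"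
  shows "moderate \<rho> x"
proof -
  obtain N where N: "eventually (\<lambda>e. norm (y e) \<le> inverse (\<rho> e ^ N)) (at_right 0)"
    using assms(1) unfolding moderate_def by blast
  show ?thesis unfolding moderate_def
    by (rule exI[of _ N]) (use N assms(2) in \<open>eventually_elim, auto\<close>)
qed

lemma mod_inv_pow:
  assumes "gauge \<rho>"
  shows "moderate \<rho> (\<lambda>e. inverse (\<rho> e ^ N))"
  unfolding moderate_def
  by (rule exI[of _ N]) (use gauge_ev[OF assms] in \<open>eventually_elim, auto\<close>)

lemma mod_add:
  fixes x y :: "real \<Rightarrow> real"
  assumes g: "gauge \<rho>" and "moderate \<rho> x" "moderate \<rho> y"
  shows "moderate \<rho> (\<lambda>e. x e + y e)"
proof -
  obtain N1 where N1: "eventually (\<lambda>e. norm (x e) \<le> inverse (\<rho> e ^ N1)) (at_right 0)"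
    using assms(2) unfolding moderate_def by blast
  obtain N2 where N2: "eventually (\<lambda>e. norm (y e) \<le> inverse (\<rho> e ^ N2)) (at_right 0)"
    using assms(3) unfolding moderate_def by blast
  show ?thesis unfolding moderate_def
  proof (rule exI[of _ "max N1 N2 + 1"])
    show "eventually (\<lambda>e. norm (x e + y e) \<le> inverse (\<rho> e ^ (max N1 N2 + 1))) (at_right 0)"
      using N1 N2 gauge_ev[OF g]
    proof eventually_elim
      case (elim e)
      let ?r = "\<rho> e"
      have a: "inverse (?r ^ N1) \<le> inverse (?r ^ max N1 N2)" using elim by (intro inv_pow_mono) auto
      have b: "inverse (?r ^ N2) \<le> inverse (?r ^ max N1 N2)" using elim by (intro inv_pow_mono) auto
      have c: "2 * inverse (?r ^ max N1 N2) \<le> inverse (?r ^ (max N1 N2 + 1))"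
      proof -
        have "2 \<le> inverse ?r" using elim by (simp add: field_simps)
        then have "2 * inverse (?r ^ max N1 N2) \<le> inverse ?r * inverse (?r ^ max N1 N2)"
          using elim by (intro mult_right_mono) auto
        then show ?thesis by (simp add: power_add mult.commute)
      qed
      have "norm (x e + y e) \<le> norm (x e) + norm (y e)" by (rule norm_triangle_ineq)
      then show ?case using a b c elim by linarith
    qed
  qed
qed

lemma mod_const:
  assumes g: "gauge \<rho>"
  shows "moderate \<rho> (\<lambda>e. (c::real))"
proof -
  have "eventually (\<lambda>e. \<rho> e < inverse (\<bar>c\<bar> + 1)) (at_right 0)"
    using g unfolding gauge_def by (intro order_tendstoD(2)) auto
  then show ?thesis unfolding moderate_def
  proof (intro exI[of _ 1])
    show "eventually (\<lambda>e. norm c \<le> inverse (\<rho> e ^ 1)) (at_right 0)"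
      using gauge_ev[OF g] \<open>eventually (\<lambda>e. \<rho> e < inverse (\<bar>c\<bar> + 1)) (at_right 0)\<close>
    proof eventually_elim
      case (elim e)
      then have "\<rho> e * (\<bar>c\<bar> + 1) < 1" by (simp add: field_simps)
      then have "\<rho> e + \<bar>c\<bar> * \<rho> e < 1" by (simp add: algebra_simps)
      then have "\<bar>c\<bar> * \<rho> e \<le> 1" using elim by linarith
      then show ?case using elim by (simp add: field_simps)
    qed
  qed
qed


lemma mod_mult:
  fixes x y :: "real \<Rightarrow> real"
  assumes g: "gauge \<rho>" and "moderate \<rho> x" "moderate \<rho> y"
  shows "moderate \<rho> (\<lambda>e. x e * y e)"
proof -
  obtain N1 where N1: "eventually (\<lambda>e. norm (x e) \<le> inverse (\<rho> e ^ N1)) (at_right 0)"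
    using assms(2) unfolding moderate_def by blast
  obtain N2 where N2: "eventually (\<lambda>e. norm (y e) \<le> inverse (\<rho> e ^ N2)) (at_right 0)"
    using assms(3) unfolding moderate_def by blast
  show ?thesis unfolding moderate_def
  proof (rule exI[of _ "N1 + N2"])
    show "eventually (\<lambda>e. norm (x e * y e) \<le> inverse (\<rho> e ^ (N1 + N2))) (at_right 0)"
      using N1 N2 gauge_ev[OF g]
    proof eventually_elim
      case (elim e)
      have "norm (x e * y e) \<le> inverse (\<rho> e ^ N1) * inverse (\<rho> e ^ N2)"
        unfolding norm_mult using elim by (intro mult_mono) auto
      then show ?case by (simp add: power_add mult.commute)
    qed
  qed
qed

lemma argmax_ex:
  fixes f :: "nat \<Rightarrow> real"
  shows "\<exists>j\<le>K. \<forall>i\<le>K. f i \<le> f j"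
proof -
  have "Max (f ` {..K}) \<in> f ` {..K}" by (intro Max_in) auto
  then obtain j where j: "j \<le> K" "f j = Max (f ` {..K})" by (metis atMost_iff imageE)
  then show ?thesis by (intro exI[of _ j]) auto
qed

lemma initial_moderate:
  assumes g: "gauge \<rho>" and mh: "moderate_hypersums \<rho> a" and K: "hypernat \<rho> K"
  shows "moderate \<rho> (\<lambda>e. \<Sum>n\<le>K e. norm (a n e))"
proof -
  define S where "S n e = (\<Sum>i\<le>n. a i e)" for n e
  define N where "N e = (SOME j. j \<le> K e \<and> (\<forall>i\<le>K e. norm (S i e) \<le> norm (S j e)))" for e
  have N: "N e \<le> K e \<and> (\<forall>i\<le>K e. norm (S i e) \<le> norm (S (N e) e))" for e
    unfolding N_def by (rule someI_ex) (rule argmax_ex)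
  have hN: "hypernat \<rho> N"
    using K unfolding hypernat_def by (rule mod_mono) (use N in auto)
  have mS: "moderate \<rho> (\<lambda>e. S (N e) e)"
    using mh hN unfolding moderate_hypersums_def S_def by blast
  have mS': "moderate \<rho> (\<lambda>e. norm (S (N e) e))" by (rule mod_mono[OF mS]) auto
  have mK: "moderate \<rho> (\<lambda>e. real (K e) + 1)"
    using K unfolding hypernat_def by (intro mod_add g mod_const)
  have mB: "moderate \<rho> (\<lambda>e. (real (K e) + 1) * (2 * norm (S (N e) e)))"
    by (intro mod_mult g mK mod_const mS')
  have an: "norm (a n e) \<le> 2 * norm (S (N e) e)" if "n \<le> K e" for n e
  proof (cases n)
    case 0
    then have "a n e = S 0 e" by (simp add: S_def)
    then have "norm (a n e) = norm (S 0 e)" by simp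
    moreover have "norm (S 0 e) \<le> norm (S (N e) e)" using N[of e] by auto
    moreover have "0 \<le> norm (S (N e) e)" by simp
    ultimately show ?thesis by linarith
  next
    case (Suc m)
    then have "a n e = S n e - S m e" by (simp add: S_def)
    then have "norm (a n e) \<le> norm (S n e) + norm (S m e)" by (simp add: norm_triangle_ineq4)
    moreover have "norm (S n e) \<le> norm (S (N e) e)" "norm (S m e) \<le> norm (S (N e) e)"
      using N[of e] that Suc by auto
    ultimately show ?thesis by linarith
  qed
  show ?thesis
  proof (rule mod_mono[OF mB], rule always_eventually, intro allI)
    fix e
    have "(\<Sum>n\<le>K e. norm (a n e)) \<le> (\<Sum>n\<le>K e. 2 * norm (S (N e) e))"
      by (rule sum_mono) (use an in auto)
    also have "\<dots> = (real (K e) + 1) * (2 * norm (S (N e) e))" by simp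
    finally show "norm (\<Sum>n\<le>K e. norm (a n e)) \<le> norm ((real (K e) + 1) * (2 * norm (S (N e) e)))"
      by (simp add: sum_nonneg)
  qed
qed


lemma powr_bound:
  fixes x L :: real
  assumes "0 \<le> x" "1 \<le> n" "x powr (1 / real n) \<le> L"
  shows "x \<le> L ^ n"
proof (cases "x = 0")
  case True
  then have "0 \<le> L" using assms by simp
  then show ?thesis using True by simp
next
  case False
  then have xp: "0 < x" using assms by simp
  have "(x powr (1 / real n)) ^ n = (x powr (1 / real n)) powr (real n)"
    using xp by (simp add: powr_realpow)
  also have "\<dots> = x powr (1 / real n * real n)" by (simp add: powr_powr)
  also have "\<dots> = x" using assms xp by simp
  finally have "x = (x powr (1 / real n)) ^ n" by simp
  also have "\<dots> \<le> L ^ n" using assms by (intro power_mono) auto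
  finally show ?thesis .
qed

lemma tail_complex:
  fixes a :: "nat \<Rightarrow> complex"
  assumes s: "summable (\<lambda>n. norm (a n))"
  shows "norm ((\<Sum>n\<le>N. a n) - suminf a) \<le> (\<Sum>n. norm (a n)) - (\<Sum>n\<le>N. norm (a n))"
    and "norm (suminf a) \<le> (\<Sum>n. norm (a n))"
proof -
  have sa: "summable a" using s by (rule summable_norm_cancel)
  have s2: "summable (\<lambda>i. norm (a (i + Suc N)))" using s by (rule summable_ignore_initial_segment)
  have "norm ((\<Sum>n\<le>N. a n) - suminf a) = norm (\<Sum>i. a (i + Suc N))"
    using suminf_minus_initial_segment[OF sa, of "Suc N"]
    by (simp add: lessThan_Suc_atMost norm_minus_commute)
  also have "\<dots> \<le> (\<Sum>i. norm (a (i + Suc N)))" using s2 by (rule summable_norm)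
  also have "\<dots> = (\<Sum>n. norm (a n)) - (\<Sum>n\<le>N. norm (a n))"
    using suminf_minus_initial_segment[OF s, of "Suc N"] by (simp add: lessThan_Suc_atMost)
  finally show "norm ((\<Sum>n\<le>N. a n) - suminf a) \<le> (\<Sum>n. norm (a n)) - (\<Sum>n\<le>N. norm (a n))" .
  show "norm (suminf a) \<le> (\<Sum>n. norm (a n))" using s by (rule summable_norm)
qed

lemma conv_crit:
  assumes g: "gauge \<rho>" and ms: "moderate \<rho> s"
    and H: "\<And>q. \<exists>M. hypernat \<rho> M \<and>
       eventually (\<lambda>e. \<forall>N. M e \<le> N \<longrightarrow> norm ((\<Sum>n\<le>N. b n e) - s e) \<le> \<rho> e ^ (q + 1)) (at_right 0)"
  shows "hyperseries_converges \<rho> b"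
  unfolding hyperseries_converges_def
proof (rule exI[of _ s], rule conjI[OF ms], rule allI)
  fix q
  obtain M where hM: "hypernat \<rho> M"
    and ev: "eventually (\<lambda>e. \<forall>N. M e \<le> N \<longrightarrow> norm ((\<Sum>n\<le>N. b n e) - s e) \<le> \<rho> e ^ (q + 1)) (at_right 0)"
    using H by blast
  show "\<exists>M. hypernat \<rho> M \<and> (\<forall>N. hypernat \<rho> N \<and> hyp_le \<rho> (\<lambda>e. real (M e)) (\<lambda>e. real (N e)) \<longrightarrow>
     hyp_less \<rho> (\<lambda>e. norm ((\<Sum>n\<le>N e. b n e) - s e)) (\<lambda>e. \<rho> e ^ q))"
  proof (intro exI[of _ M] conjI allI impI hM)
    fix N assume "hypernat \<rho> N \<and> hyp_le \<rho> (\<lambda>e. real (M e)) (\<lambda>e. real (N e))"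
    then obtain z where z: "negligible \<rho> z" and le: "eventually (\<lambda>e. real (M e) \<le> real (N e) + z e) (at_right 0)"
      unfolding hyp_le_def by blast
    have z1: "eventually (\<lambda>e. norm (z e) \<le> \<rho> e ^ 1) (at_right 0)" using z unfolding negligible_def by blast
    show "hyp_less \<rho> (\<lambda>e. norm ((\<Sum>n\<le>N e. b n e) - s e)) (\<lambda>e. \<rho> e ^ q)"
      unfolding hyp_less_def
    proof (intro exI[of _ "q + 2"])
      show "eventually (\<lambda>e. \<rho> e ^ q - norm ((\<Sum>n\<le>N e. b n e) - s e) > \<rho> e ^ (q + 2)) (at_right 0)"
        using ev le z1 gauge_ev[OF g]
      proof eventually_elim
        case (elim e)
        let ?r = "\<rho> e"
        have "real (M e) < real (N e) + 1" using elim by auto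
        then have "M e \<le> N e" by linarith
        then have b: "norm ((\<Sum>n\<le>N e. b n e) - s e) \<le> ?r ^ (q + 1)" using elim by blast
        have pq: "0 < ?r ^ q" using elim by simp
        have r1: "?r ^ (q + 1) < ?r ^ q / 2" using elim pq by (simp add: field_simps)
        have r2: "?r ^ (q + 2) < ?r ^ q / 2"
        proof -
          have "?r ^ (q + 2) = ?r ^ q * (?r * ?r)" by (simp add: power_add power2_eq_square)
          moreover have "?r * ?r < 1 / 2"
          proof -
            have "?r * ?r < ?r * 1" using elim by (intro mult_strict_left_mono) auto
            then show ?thesis using elim by linarith
          qed
          ultimately show ?thesis using pq by (simp add: field_simps)
        qed
        show ?case using b r1 r2 by linarith
      qed
    qed
  qed
qed


theorem theorem2p18:
  fixes \<rho> :: "real \<Rightarrow> real" and a :: "nat \<Rightarrow> real \<Rightarrow> complex"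
    and k :: "real \<Rightarrow> nat" and L :: "real \<Rightarrow> real"
  assumes "gauge \<rho>"
    and "moderate_hypersums \<rho> a"
    and "hypernat \<rho> k"
    and "moderate \<rho> L" and "hyp_less \<rho> (\<lambda>e. 0) L"
    and "eventually (\<lambda>e. \<forall>n::nat. n \<ge> k e \<and> n \<ge> 1 \<longrightarrow>
            norm (a n e) powr (1 / real n) \<le> L e) (at_right 0)"
    and "hyp_less \<rho> L (\<lambda>e. 1)"
  shows "moderate_hypersums \<rho> (\<lambda>n e. complex_of_real (norm (a n e)))
    \<and> hyperseries_converges \<rho> (\<lambda>n e. complex_of_real (norm (a n e)))
    \<and> hyperseries_converges \<rho> a"
proof -
  note g = assms(1)
  define K where "K e = k e + 1" for e
  have hK: "hypernat \<rho> K"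
    using assms(3) unfolding hypernat_def K_def by (simp add: mod_add g mod_const)
  obtain m0 where m0: "eventually (\<lambda>e. L e - 0 > \<rho> e ^ m0) (at_right 0)"
    using assms(5) unfolding hyp_less_def by blast
  obtain m1 where m1: "eventually (\<lambda>e. 1 - L e > \<rho> e ^ m1) (at_right 0)"
    using assms(7) unfolding hyp_less_def by blast
  define A where "A e = (\<Sum>n\<le>K e. norm (a n e))" for e
  define B where "B e = A e + inverse (\<rho> e ^ m1)" for e
  have mB: "moderate \<rho> B"
    unfolding B_def A_def by (intro mod_add g initial_moderate assms(2) hK mod_inv_pow)
  define f where "f e n = norm (a n e)" for e n
  define P where "P e \<longleftrightarrow> 0 < \<rho> e \<and> \<rho> e < 1/2 \<and> 0 \<le> L e \<and> 1 - L e > \<rho> e ^ m1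
     \<and> (\<forall>n. n \<ge> K e \<longrightarrow> f e n \<le> L e ^ n)" for e
  have evP: "eventually P (at_right 0)"
    using gauge_ev[OF g] m0 m1 assms(6)
  proof eventually_elim
    case (elim e)
    have "0 < \<rho> e ^ m0" using elim by simp
    then have L0: "0 \<le> L e" using elim by linarith
    have "f e n \<le> L e ^ n" if "n \<ge> K e" for n
      using that elim unfolding f_def K_def by (intro powr_bound) auto
    then show ?case unfolding P_def using elim L0 by auto
  qed
  have facts: "summable (f e) \<and> suminf (f e) \<le> B e \<and> (\<forall>N. (\<Sum>n\<le>N. f e n) \<le> suminf (f e))
     \<and> 0 \<le> suminf (f e)" if "P e" for e
  proof -
    have f0: "\<And>n. 0 \<le> f e n" by (simp add: f_def)
    have L1: "L e < 1"
    proof -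
      have "0 < \<rho> e ^ m1" using that unfolding P_def by simp
      then show ?thesis using that unfolding P_def by linarith
    qed
    note G = geom_facts[OF f0 _ L1, of "K e"]
    have fb: "\<And>n. K e \<le> n \<Longrightarrow> f e n \<le> L e ^ n" using that unfolding P_def by blast
    have L0: "0 \<le> L e" using that unfolding P_def by blast
    have sf: "summable (f e)" using G(1)[OF L0 fb] .
    have "suminf (f e) \<le> (\<Sum>n<K e. f e n) + 1 / (1 - L e)" using G(3)[OF L0 fb] .
    also have "(\<Sum>n<K e. f e n) \<le> A e"
      unfolding A_def f_def by (intro sum_mono2) auto
    also have "1 / (1 - L e) \<le> inverse (\<rho> e ^ m1)"
    proof -
      have d0: "0 < \<rho> e ^ m1" using that unfolding P_def by simp
      have d1: "\<rho> e ^ m1 \<le> 1 - L e" using that unfolding P_def by simp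
      have "1 / (1 - L e) \<le> 1 / \<rho> e ^ m1"
        by (rule divide_left_mono) (use d0 d1 in auto)
      then show ?thesis by (simp add: inverse_eq_divide)
    qed
    finally have "suminf (f e) \<le> B e" unfolding B_def by simp
    moreover have "0 \<le> suminf (f e)" using sf f0 by (simp add: suminf_nonneg)
    ultimately show ?thesis using sf G(4)[OF L0 fb] by blast
  qed
  have part1: "moderate_hypersums \<rho> (\<lambda>n e. complex_of_real (norm (a n e)))"
    unfolding moderate_hypersums_def
  proof (intro allI impI)
    fix N :: "real \<Rightarrow> nat"
    show "moderate \<rho> (\<lambda>e. \<Sum>n\<le>N e. complex_of_real (norm (a n e)))"
    proof (rule mod_mono[OF mB])
      show "eventually (\<lambda>e. norm (\<Sum>n\<le>N e. complex_of_real (norm (a n e))) \<le> norm (B e)) (at_right 0)"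
        using evP
      proof eventually_elim
        case (elim e)
        have "norm (\<Sum>n\<le>N e. complex_of_real (norm (a n e))) = (\<Sum>n\<le>N e. f e n)"
          unfolding f_def of_real_sum[symmetric] norm_of_real by (simp add: sum_nonneg)
        also have "\<dots> \<le> B e"
        proof -
          have "(\<Sum>n\<le>N e. f e n) \<le> suminf (f e)" "suminf (f e) \<le> B e" using facts[OF elim] by blast+
          then show ?thesis by linarith
        qed
        finally show ?case by simp
      qed
    qed
  qed
  have Mex: "\<exists>M. hypernat \<rho> M \<and> eventually (\<lambda>e. \<forall>N. M e \<le> N \<longrightarrow>
      suminf (f e) - (\<Sum>n\<le>N. f e n) \<le> \<rho> e ^ (q + 1)) (at_right 0)" for q
  proof -
    define M where "M e = K e + nat \<lceil>inverse (\<rho> e ^ (q + 1 + 2 * m1))\<rceil>" for e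
    have hM: "hypernat \<rho> M"
      unfolding hypernat_def
    proof (rule mod_mono)
      show "moderate \<rho> (\<lambda>e. real (K e) + (inverse (\<rho> e ^ (q + 1 + 2 * m1)) + 1))"
        using hK unfolding hypernat_def by (intro mod_add g mod_inv_pow mod_const)
      show "eventually (\<lambda>e. norm (real (M e)) \<le> norm (real (K e) + (inverse (\<rho> e ^ (q + 1 + 2 * m1)) + 1))) (at_right 0)"
        using gauge_ev[OF g]
      proof eventually_elim
        case (elim e)
        let ?x = "inverse (\<rho> e ^ (q + 1 + 2 * m1))"
        have x0: "0 \<le> ?x" using elim by simp
        have "real (nat \<lceil>?x\<rceil>) \<le> ?x + 1" using x0 by linarith
        then show ?case unfolding M_def using x0 by simp
      qed
    qed
    show ?thesis
    proof (intro exI[of _ M] conjI hM)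
      show "eventually (\<lambda>e. \<forall>N. M e \<le> N \<longrightarrow> suminf (f e) - (\<Sum>n\<le>N. f e n) \<le> \<rho> e ^ (q + 1)) (at_right 0)"
        using evP
      proof eventually_elim
        case (elim e)
        show ?case
        proof (intro allI impI)
          fix N assume MN: "M e \<le> N"
          show "suminf (f e) - (\<Sum>n\<le>N. f e n) \<le> \<rho> e ^ (q + 1)"
          proof (rule tail_small[of "\<rho> e" "L e" m1 "f e" "K e" "M e" q N])
            show "real (M e) \<ge> inverse (\<rho> e ^ (q + 1 + 2 * m1))"
              unfolding M_def by (simp add: real_nat_ceiling_ge add_increasing)
          qed (use elim MN in \<open>auto simp: P_def f_def M_def\<close>)
        qed
      qed
    qed
  qed
  have part2: "hyperseries_converges \<rho> (\<lambda>n e. complex_of_real (norm (a n e)))"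
  proof (rule conv_crit[OF g, of "\<lambda>e. complex_of_real (suminf (f e))"])
    show "moderate \<rho> (\<lambda>e. complex_of_real (suminf (f e)))"
    proof (rule mod_mono[OF mB])
      show "eventually (\<lambda>e. norm (complex_of_real (suminf (f e))) \<le> norm (B e)) (at_right 0)"
        using evP
      proof eventually_elim
        case (elim e)
        then show ?case using facts[OF elim] by auto
      qed
    qed
    fix q
    obtain M where hM: "hypernat \<rho> M" and ev: "eventually (\<lambda>e. \<forall>N. M e \<le> N \<longrightarrow>
      suminf (f e) - (\<Sum>n\<le>N. f e n) \<le> \<rho> e ^ (q + 1)) (at_right 0)" using Mex by blast
    show "\<exists>M. hypernat \<rho> M \<and> eventually (\<lambda>e. \<forall>N. M e \<le> N \<longrightarrow>
       norm ((\<Sum>n\<le>N. complex_of_real (norm (a n e))) - complex_of_real (suminf (f e))) \<le> \<rho> e ^ (q + 1)) (at_right 0)"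
    proof (intro exI[of _ M] conjI hM)
      show "eventually (\<lambda>e. \<forall>N. M e \<le> N \<longrightarrow>
       norm ((\<Sum>n\<le>N. complex_of_real (norm (a n e))) - complex_of_real (suminf (f e))) \<le> \<rho> e ^ (q + 1)) (at_right 0)"
        using ev evP
      proof eventually_elim
        case (elim e)
        show ?case
        proof (intro allI impI)
          fix N assume "M e \<le> N"
          have "norm ((\<Sum>n\<le>N. complex_of_real (norm (a n e))) - complex_of_real (suminf (f e)))
              = \<bar>(\<Sum>n\<le>N. f e n) - suminf (f e)\<bar>"
            unfolding f_def of_real_sum[symmetric] of_real_diff[symmetric] norm_of_real by simp
          also have "\<dots> = suminf (f e) - (\<Sum>n\<le>N. f e n)" using facts[OF elim(2)] by auto
          also have "\<dots> \<le> \<rho> e ^ (q + 1)" using elim \<open>M e \<le> N\<close> by blast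
          finally show "norm ((\<Sum>n\<le>N. complex_of_real (norm (a n e))) - complex_of_real (suminf (f e))) \<le> \<rho> e ^ (q + 1)" .
        qed
      qed
    qed
  qed
  have part3: "hyperseries_converges \<rho> a"
  proof (rule conv_crit[OF g, of "\<lambda>e. suminf (\<lambda>n. a n e)"])
    show "moderate \<rho> (\<lambda>e. suminf (\<lambda>n. a n e))"
    proof (rule mod_mono[OF mB])
      show "eventually (\<lambda>e. norm (suminf (\<lambda>n. a n e)) \<le> norm (B e)) (at_right 0)"
        using evP
      proof eventually_elim
        case (elim e)
        have "norm (suminf (\<lambda>n. a n e)) \<le> suminf (f e)"
          using tail_complex(2)[of "\<lambda>n. a n e"] facts[OF elim] unfolding f_def by blast
        then show ?case using facts[OF elim] by auto
      qed
    qed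
    fix q
    obtain M where hM: "hypernat \<rho> M" and ev: "eventually (\<lambda>e. \<forall>N. M e \<le> N \<longrightarrow>
      suminf (f e) - (\<Sum>n\<le>N. f e n) \<le> \<rho> e ^ (q + 1)) (at_right 0)" using Mex by blast
    show "\<exists>M. hypernat \<rho> M \<and> eventually (\<lambda>e. \<forall>N. M e \<le> N \<longrightarrow>
       norm ((\<Sum>n\<le>N. a n e) - suminf (\<lambda>n. a n e)) \<le> \<rho> e ^ (q + 1)) (at_right 0)"
    proof (intro exI[of _ M] conjI hM)
      show "eventually (\<lambda>e. \<forall>N. M e \<le> N \<longrightarrow>
       norm ((\<Sum>n\<le>N. a n e) - suminf (\<lambda>n. a n e)) \<le> \<rho> e ^ (q + 1)) (at_right 0)"
        using ev evP
      proof eventually_elim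
        case (elim e)
        show ?case
        proof (intro allI impI)
          fix N assume "M e \<le> N"
          have "norm ((\<Sum>n\<le>N. a n e) - suminf (\<lambda>n. a n e)) \<le> suminf (f e) - (\<Sum>n\<le>N. f e n)"
            using tail_complex(1)[of "\<lambda>n. a n e" N] facts[OF elim(2)] unfolding f_def by blast
          also have "\<dots> \<le> \<rho> e ^ (q + 1)" using elim \<open>M e \<le> N\<close> by blast
          finally show "norm ((\<Sum>n\<le>N. a n e) - suminf (\<lambda>n. a n e)) \<le> \<rho> e ^ (q + 1)" .
        qed
      qed
    qed
  qed
  show ?thesis using part1 part2 part3 by blast
qed

end
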